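(* The following five $8$-dimensional complex Lie algebras are mutually non-isomorphic. Each has basis $\mathbf x_1,\dots,\mathbf x_6,\mathbf y_1,\mathbf y_2$, with the listed nonzero brackets (together with those obtained by antisymmetry) and all other brackets of basis elements equal to zero: (1) $N^{8,2}_1$: $[\mathbf x_1,\mathbf x_2]=\mathbf y_1$, $[\mathbf x_3,\mathbf x_4]=\mathbf y_2$, $[\mathbf x_5,\mathbf x_6]=\mathbf y_1+\mathbf y_2$; (2) $N^{8,2}_2$: $[\mathbf x_5,\mathbf x_2]=[\mathbf x_6,\mathbf x_1]=\mathbf y_1$, $[\mathbf x_5,\mathbf x_3]=[\mathbf x_6,\mathbf x_4]=\mathbf y_2$; (3) $N^{8,2}_3$: $[\mathbf x_1,\mathbf x_2]=[\mathbf x_6,\mathbf x_5]=\mathbf y_1$, $[\mathbf x_3,\mathbf x_6]=[\mathbf x_5,\mathbf x_4]=\mathbf y_2$; (4) $N^{8,2}_4$: $[\mathbf x_1,\mathbf x_2]=[\mathbf x_3,\mathbf x_6]=[\mathbf x_5,\mathbf x_4]=\mathbf y_1$, $[\mathbf x_6,\mathbf x_5]=\mathbf y_2$; (5) $N^{8,2}_5$: $[\mathbf x_1,\mathbf x_6]=[\mathbf x_3,\mathbf x_4]=[\mathbf x_5,\mathbf x_2]=\mathbf y_1$, $[\mathbf x_6,\mathbf x_3]=[\mathbf x_4,\mathbf x_5]=\mathbf y_2$. *)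

theory Defs
  imports "HOL-Analysis.Analysis"
begin

datatype basis = X1 | X2 | X3 | X4 | X5 | X6 | Y1 | Y2

lemma UNIV_basis: "(UNIV :: basis set) = {X1, X2, X3, X4, X5, X6, Y1, Y2}"
  by (auto intro: basis.exhaust)

instance basis :: finite
  by standard (simp add: UNIV_basis)

type_synonym vec8 = "complex ^ basis"

definition e :: "basis \<Rightarrow> vec8" where
  "e b = axis b 1"

text \<open>A multiplication table: list of listed brackets [p,q] = w; the bracket of basis
  elements is extended by antisymmetry, all others zero.\<close>
type_synonym table = "((basis \<times> basis) \<times> vec8) list"

definition br :: "table \<Rightarrow> basis \<Rightarrow> basis \<Rightarrow> vec8" where
  "br L a b = sum_list (map (\<lambda>((p,q),w). if (a,b) = (p,q) then w
                                         else if (a,b) = (q,p) then - w else 0) L)"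

definition bracket :: "table \<Rightarrow> vec8 \<Rightarrow> vec8 \<Rightarrow> vec8" where
  "bracket L u v = (\<chi> k. \<Sum>i\<in>UNIV. \<Sum>j\<in>UNIV. u$i * v$j * (br L i j)$k)"

definition lie_iso :: "table \<Rightarrow> table \<Rightarrow> bool" where
  "lie_iso L1 L2 \<longleftrightarrow> (\<exists>A :: complex ^ basis ^ basis. invertible A \<and>
      (\<forall>u v. A *v bracket L1 u v = bracket L2 (A *v u) (A *v v)))"

definition N1 :: table where
  "N1 = [((X1,X2), e Y1), ((X3,X4), e Y2), ((X5,X6), e Y1 + e Y2)]"

definition N2 :: table where
  "N2 = [((X5,X2), e Y1), ((X6,X1), e Y1), ((X5,X3), e Y2), ((X6,X4), e Y2)]"

definition N3 :: table where
  "N3 = [((X1,X2), e Y1), ((X6,X5), e Y1), ((X3,X6), e Y2), ((X5,X4), e Y2)]"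

definition N4 :: table where
  "N4 = [((X1,X2), e Y1), ((X3,X6), e Y1), ((X5,X4), e Y1), ((X6,X5), e Y2)]"

definition N5 :: table where
  "N5 = [((X1,X6), e Y1), ((X3,X4), e Y1), ((X5,X2), e Y1), ((X6,X3), e Y2), ((X4,X5), e Y2)]"

definition N :: "nat \<Rightarrow> table" where
  "N i = (if i = 1 then N1 else if i = 2 then N2 else if i = 3 then N3
          else if i = 4 then N4 else N5)"

end

theory Submission
  imports Defs
begin

lemma br_N1: "bracket N1 u v $ k = (if k = Y1 then u$X1 * v$X2 - u$X2 * v$X1 + u$X5 * v$X6 - u$X6 * v$X5
  else if k = Y2 then u$X3 * v$X4 - u$X4 * v$X3 + u$X5 * v$X6 - u$X6 * v$X5 else 0)"
  by (cases k) (simp_all add: bracket_def UNIV_basis br_def N1_def e_def axis_def algebra_simps)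

lemma br_N2: "bracket N2 u v $ k = (if k = Y1 then u$X5 * v$X2 - u$X2 * v$X5 + u$X6 * v$X1 - u$X1 * v$X6
  else if k = Y2 then u$X5 * v$X3 - u$X3 * v$X5 + u$X6 * v$X4 - u$X4 * v$X6 else 0)"
  by (cases k) (simp_all add: bracket_def UNIV_basis br_def N2_def e_def axis_def algebra_simps)

lemma br_N3: "bracket N3 u v $ k = (if k = Y1 then u$X1 * v$X2 - u$X2 * v$X1 + u$X6 * v$X5 - u$X5 * v$X6
  else if k = Y2 then u$X3 * v$X6 - u$X6 * v$X3 + u$X5 * v$X4 - u$X4 * v$X5 else 0)"
  by (cases k) (simp_all add: bracket_def UNIV_basis br_def N3_def e_def axis_def algebra_simps)

lemma br_N4: "bracket N4 u v $ k = (if k = Y1 then u$X1 * v$X2 - u$X2 * v$X1 + u$X3 * v$X6 - u$X6 * v$X3 + u$X5 * v$X4 - u$X4 * v$X5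
  else if k = Y2 then u$X6 * v$X5 - u$X5 * v$X6 else 0)"
  by (cases k) (simp_all add: bracket_def UNIV_basis br_def N4_def e_def axis_def algebra_simps)

lemma br_N5: "bracket N5 u v $ k = (if k = Y1 then u$X1 * v$X6 - u$X6 * v$X1 + u$X3 * v$X4 - u$X4 * v$X3 + u$X5 * v$X2 - u$X2 * v$X5
  else if k = Y2 then u$X6 * v$X3 - u$X3 * v$X6 + u$X4 * v$X5 - u$X5 * v$X4 else 0)"
  by (cases k) (simp_all add: bracket_def UNIV_basis br_def N5_def e_def axis_def algebra_simps)

section \<open>Invariants\<close>

definition Rk :: "table \<Rightarrow> vec8 \<Rightarrow> bool" where
  "Rk L u \<longleftrightarrow> (\<exists>w. \<forall>v. \<exists>c. bracket L u v = c *s w)"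

definition indep :: "vec8 \<Rightarrow> vec8 \<Rightarrow> bool" where
  "indep z1 z2 \<longleftrightarrow> (\<forall>a b. a *s z1 + b *s z2 = 0 \<longrightarrow> a = 0 \<and> b = 0)"

definition PA :: "table \<Rightarrow> bool" where
  "PA L \<longleftrightarrow> (\<exists>u v. Rk L u \<and> Rk L v \<and> bracket L u v \<noteq> 0)"

definition PD :: "table \<Rightarrow> bool" where
  "PD L \<longleftrightarrow> (\<exists>u1 v1 u2 v2. Rk L u1 \<and> Rk L u2 \<and> indep (bracket L u1 v1) (bracket L u2 v2))"

definition PE :: "table \<Rightarrow> bool" where
  "PE L \<longleftrightarrow> (\<exists>u1 v1 u2 v2 u3 v3. Rk L u1 \<and> Rk L u2 \<and> Rk L u3 \<and>
     indep (bracket L u1 v1) (bracket L u2 v2) \<and> indep (bracket L u1 v1) (bracket L u3 v3) \<and>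
     indep (bracket L u2 v2) (bracket L u3 v3))"

lemma transport:
  fixes A B :: "complex ^ basis ^ basis"
  assumes AB: "A ** B = mat 1" and BA: "B ** A = mat 1"
    and hom: "\<forall>u v. A *v bracket L1 u v = bracket L2 (A *v u) (A *v v)"
  shows "(PA L1 \<longrightarrow> PA L2) \<and> (PD L1 \<longrightarrow> PD L2) \<and> (PE L1 \<longrightarrow> PE L2)"
proof -
  have surj: "A *v (B *v x) = x" for x by (simp add: matrix_vector_mul_assoc AB)
  have inj: "x = 0" if "A *v x = 0" for x
  proof -
    have "B *v (A *v x) = x" by (simp add: matrix_vector_mul_assoc BA)
    with that show ?thesis by simp
  qed
  have R: "Rk L2 (A *v u)" if "Rk L1 u" for u
  proof -
    from that obtain w where w: "\<forall>v. \<exists>c. bracket L1 u v = c *s w" unfolding Rk_def by blast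
    have "\<exists>c. bracket L2 (A *v u) v' = c *s (A *v w)" for v'
    proof -
      obtain c where c: "bracket L1 u (B *v v') = c *s w" using w by blast
      have "bracket L2 (A *v u) v' = bracket L2 (A *v u) (A *v (B *v v'))" by (simp add: surj)
      also have "\<dots> = A *v bracket L1 u (B *v v')" using hom by simp
      also have "\<dots> = c *s (A *v w)" by (simp add: c vector_scalar_commute)
      finally show ?thesis by blast
    qed
    then show ?thesis unfolding Rk_def by blast
  qed
  have I: "indep (A *v z1) (A *v z2)" if "indep z1 z2" for z1 z2
    unfolding indep_def
  proof (intro allI impI)
    fix a b assume "a *s (A *v z1) + b *s (A *v z2) = 0"
    then have "A *v (a *s z1 + b *s z2) = 0"
      by (simp add: matrix_vector_right_distrib vector_scalar_commute)
    then have "a *s z1 + b *s z2 = 0" by (rule inj)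
    then show "a = 0 \<and> b = 0" using that unfolding indep_def by blast
  qed
  have H: "A *v bracket L1 u v = bracket L2 (A *v u) (A *v v)" for u v using hom by blast
  show ?thesis
  proof (intro conjI impI)
    assume "PA L1"
    then obtain u v where "Rk L1 u" "Rk L1 v" "bracket L1 u v \<noteq> 0" unfolding PA_def by blast
    then show "PA L2" unfolding PA_def
      by (metis R H inj)
  next
    assume "PD L1"
    then obtain u1 v1 u2 v2 where "Rk L1 u1" "Rk L1 u2" "indep (bracket L1 u1 v1) (bracket L1 u2 v2)"
      unfolding PD_def by blast
    then show "PD L2" unfolding PD_def
      by (metis R H I)
  next
    assume "PE L1"
    then obtain u1 v1 u2 v2 u3 v3 where "Rk L1 u1" "Rk L1 u2" "Rk L1 u3"
      "indep (bracket L1 u1 v1) (bracket L1 u2 v2)" "indep (bracket L1 u1 v1) (bracket L1 u3 v3)"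
      "indep (bracket L1 u2 v2) (bracket L1 u3 v3)"
      unfolding PE_def by blast
    then show "PE L2" unfolding PE_def
      by (metis R H I)
  qed
qed

lemma iso_props:
  assumes "lie_iso L1 L2"
  shows "(PA L1 \<longleftrightarrow> PA L2) \<and> (PD L1 \<longleftrightarrow> PD L2) \<and> (PE L1 \<longleftrightarrow> PE L2)"
proof -
  obtain A :: "complex ^ basis ^ basis" where inv: "invertible A"
    and hom: "\<forall>u v. A *v bracket L1 u v = bracket L2 (A *v u) (A *v v)"
    using assms unfolding lie_iso_def by blast
  obtain B where AB: "A ** B = mat 1" and BA: "B ** A = mat 1" using inv unfolding invertible_def by blast
  have hom2: "\<forall>u v. B *v bracket L2 u v = bracket L1 (B *v u) (B *v v)"
  proof (intro allI)
    fix u v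
    have s: "A *v (B *v x) = x" for x by (simp add: matrix_vector_mul_assoc AB)
    have "B *v bracket L2 u v = B *v bracket L2 (A *v (B *v u)) (A *v (B *v v))" by (simp add: s)
    also have "\<dots> = B *v (A *v bracket L1 (B *v u) (B *v v))" using hom by simp
    also have "\<dots> = bracket L1 (B *v u) (B *v v)" by (simp add: matrix_vector_mul_assoc BA)
    finally show "B *v bracket L2 u v = bracket L1 (B *v u) (B *v v)" .
  qed
  show ?thesis using transport[OF AB BA hom] transport[OF BA AB hom2] by blast
qed

lemma Rk_minor:
  assumes "Rk L u"
  shows "bracket L u v $ Y1 * bracket L u v' $ Y2 = bracket L u v $ Y2 * bracket L u v' $ Y1"
proof -
  obtain w where w: "\<forall>v. \<exists>c. bracket L u v = c *s w" using assms unfolding Rk_def by blast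
  obtain c c' where "bracket L u v = c *s w" "bracket L u v' = c' *s w" using w by blast
  then show ?thesis by (simp add: mult_ac)
qed

lemma Rk_line: "(\<And>v. bracket L u v = c v *s w) \<Longrightarrow> Rk L u"
  unfolding Rk_def by blast

lemma not_indep_line:
  assumes z1: "z1 = a1 *s w" and z2: "z2 = a2 *s w"
  shows "\<not> indep z1 z2"
proof (cases "a1 = 0")
  case True
  then have "1 *s z1 + 0 *s z2 = 0" using z1 by (simp add: vec_eq_iff)
  then have "\<exists>a b. a *s z1 + b *s z2 = 0 \<and> \<not> (a = 0 \<and> b = 0)" by (intro exI[of _ 1] exI[of _ 0]) simp
  then show ?thesis unfolding indep_def by blast
next
  case False
  have "a2 *s z1 + (- a1) *s z2 = 0" using z1 z2 by (simp add: vec_eq_iff algebra_simps)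
  then have "\<exists>a b. a *s z1 + b *s z2 = 0 \<and> \<not> (a = 0 \<and> b = 0)" using False
    by (intro exI[of _ a2] exI[of _ "- a1"]) simp
  then show ?thesis unfolding indep_def by blast
qed

lemma indep_det: "z1$Y1 * z2$Y2 \<noteq> z1$Y2 * z2$Y1 \<Longrightarrow> indep z1 z2"
  unfolding indep_def
proof (intro allI impI)
  fix a b assume d: "z1$Y1 * z2$Y2 \<noteq> z1$Y2 * z2$Y1" and e: "a *s z1 + b *s z2 = 0"
  have "(a *s z1 + b *s z2) $ Y1 = 0" "(a *s z1 + b *s z2) $ Y2 = 0" by (simp_all add: e)
  then have e1: "a * z1$Y1 + b * z2$Y1 = 0" and e2: "a * z1$Y2 + b * z2$Y2 = 0" by simp_all
  have "a * (z1$Y1 * z2$Y2 - z1$Y2 * z2$Y1) = (a * z1$Y1 + b * z2$Y1) * z2$Y2 - (a * z1$Y2 + b * z2$Y2) * z2$Y1"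
    by (simp add: algebra_simps)
  also have "\<dots> = 0" by (simp add: e1 e2)
  finally have "a = 0" using d by simp
  have "b * (z1$Y1 * z2$Y2 - z1$Y2 * z2$Y1) = (a * z1$Y2 + b * z2$Y2) * z1$Y1 - (a * z1$Y1 + b * z2$Y1) * z1$Y2"
    by (simp add: algebra_simps)
  also have "\<dots> = 0" by (simp add: e1 e2)
  finally have "b = 0" using d by simp
  with \<open>a = 0\<close> show "a = 0 \<and> b = 0" by simp
qed


section \<open>Characterising Rk in the concrete algebras\<close>

lemma R_N2: assumes "Rk N2 u" shows "u$X5 = 0 \<and> u$X6 = 0"
proof -
  note m = Rk_minor[OF assms]
  from m[of "axis X1 1" "axis X4 1"] have "u$X6 = 0" by (simp add: br_N2 axis_def)
  moreover from m[of "axis X2 1" "axis X3 1"] have "u$X5 = 0" by (simp add: br_N2 axis_def)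
  ultimately show ?thesis by simp
qed

lemma R_N4: assumes "Rk N4 u" shows "u$X5 = 0 \<and> u$X6 = 0"
proof -
  note m = Rk_minor[OF assms]
  from m[of "axis X3 1" "axis X5 1"] have "u$X6 = 0" by (simp add: br_N4 axis_def)
  moreover from m[of "axis X4 1" "axis X6 1"] have "u$X5 = 0" by (simp add: br_N4 axis_def)
  ultimately show ?thesis by simp
qed

lemma R_N5: assumes "Rk N5 u" shows "u$X3 = 0 \<and> u$X4 = 0 \<and> u$X5 = 0 \<and> u$X6 = 0"
proof -
  note m = Rk_minor[OF assms]
  from m[of "axis X1 1" "axis X3 1"] have 6: "u$X6 = 0" by (simp add: br_N5 axis_def)
  from m[of "axis X2 1" "axis X4 1"] have 5: "u$X5 = 0" by (simp add: br_N5 axis_def)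
  from m[of "axis X3 1" "axis X5 1"] 6 have 4: "u$X4 = 0" by (simp add: br_N5 axis_def)
  from m[of "axis X4 1" "axis X6 1"] 5 have 3: "u$X3 = 0" by (simp add: br_N5 axis_def)
  from 3 4 5 6 show ?thesis by simp
qed

lemma R_N3: assumes "Rk N3 u"
  shows "u$X5 = 0 \<and> u$X6 = 0 \<and> ((u$X1 = 0 \<and> u$X2 = 0) \<or> (u$X3 = 0 \<and> u$X4 = 0))"
proof -
  note m = Rk_minor[OF assms]
  from m[of "axis X3 1" "axis X5 1"] have 6: "u$X6 = 0" by (simp add: br_N3 axis_def)
  from m[of "axis X4 1" "axis X6 1"] have 5: "u$X5 = 0" by (simp add: br_N3 axis_def)
  from m[of "axis X1 1" "axis X5 1"] 5 6 have a: "u$X2 * u$X4 = 0" by (simp add: br_N3 axis_def)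
  from m[of "axis X1 1" "axis X6 1"] 5 6 have b: "u$X2 * u$X3 = 0" by (simp add: br_N3 axis_def)
  from m[of "axis X2 1" "axis X5 1"] 5 6 have c: "u$X1 * u$X4 = 0" by (simp add: br_N3 axis_def)
  from m[of "axis X2 1" "axis X6 1"] 5 6 have d: "u$X1 * u$X3 = 0" by (simp add: br_N3 axis_def)
  from a b c d 5 6 show ?thesis by auto
qed

lemma vec_eqI8:
  fixes z z' :: vec8
  assumes "z$X1 = z'$X1" "z$X2 = z'$X2" "z$X3 = z'$X3" "z$X4 = z'$X4" "z$X5 = z'$X5" "z$X6 = z'$X6"
    "z$Y1 = z'$Y1" "z$Y2 = z'$Y2"
  shows "z = z'"
  unfolding vec_eq_iff
proof
  fix k show "z$k = z'$k" using assms by (cases k) auto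
qed

lemma not_PA_N2: "\<not> PA N2"
proof
  assume "PA N2"
  then obtain u v where "Rk N2 u" "Rk N2 v" "bracket N2 u v \<noteq> 0" unfolding PA_def by blast
  moreover from R_N2[OF \<open>Rk N2 u\<close>] R_N2[OF \<open>Rk N2 v\<close>] have "bracket N2 u v = 0"
    by (intro vec_eqI8) (simp_all add: br_N2)
  ultimately show False by simp
qed

lemma not_PA_N5: "\<not> PA N5"
proof
  assume "PA N5"
  then obtain u v where "Rk N5 u" "Rk N5 v" "bracket N5 u v \<noteq> 0" unfolding PA_def by blast
  moreover from R_N5[OF \<open>Rk N5 u\<close>] R_N5[OF \<open>Rk N5 v\<close>] have "bracket N5 u v = 0"
    by (intro vec_eqI8) (simp_all add: br_N5)
  ultimately show False by simp
qed

lemma line_N4: "Rk N4 u \<Longrightarrow> bracket N4 u v = (bracket N4 u v $ Y1) *s axis Y1 1"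
  using R_N4[of u] by (intro vec_eqI8) (simp_all add: br_N4 axis_def)

lemma line_N5: "Rk N5 u \<Longrightarrow> bracket N5 u v = (bracket N5 u v $ Y1) *s axis Y1 1"
  using R_N5[of u] by (intro vec_eqI8) (simp_all add: br_N5 axis_def)

lemma not_PD_N4: "\<not> PD N4"
  unfolding PD_def using line_N4 not_indep_line by metis

lemma not_PD_N5: "\<not> PD N5"
  unfolding PD_def using line_N5 not_indep_line by metis

lemma line_N3: "Rk N3 u \<Longrightarrow>
   (\<forall>v. bracket N3 u v = (bracket N3 u v $ Y1) *s axis Y1 1) \<or>
   (\<forall>v. bracket N3 u v = (bracket N3 u v $ Y2) *s axis Y2 1)"
proof -
  assume "Rk N3 u"
  from R_N3[OF this] show ?thesis
  proof (elim conjE disjE)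
    assume "u$X5 = 0" "u$X6 = 0" "u$X1 = 0" "u$X2 = 0"
    then show ?thesis by (intro disjI2 allI vec_eqI8) (simp_all add: br_N3 axis_def)
  next
    assume "u$X5 = 0" "u$X6 = 0" "u$X3 = 0" "u$X4 = 0"
    then show ?thesis by (intro disjI1 allI vec_eqI8) (simp_all add: br_N3 axis_def)
  qed
qed

lemma not_PE_N3: "\<not> PE N3"
proof
  assume "PE N3"
  then obtain u1 v1 u2 v2 u3 v3 where r: "Rk N3 u1" "Rk N3 u2" "Rk N3 u3" and
     i: "indep (bracket N3 u1 v1) (bracket N3 u2 v2)" "indep (bracket N3 u1 v1) (bracket N3 u3 v3)"
      "indep (bracket N3 u2 v2) (bracket N3 u3 v3)"
    unfolding PE_def by blast
  from line_N3[OF r(1)] line_N3[OF r(2)] line_N3[OF r(3)] i show False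
    by (metis not_indep_line)
qed

lemma R_x1_N1: "Rk N1 (axis X1 1)"
  by (rule Rk_line[where c="\<lambda>v. v$X2" and w="axis Y1 1"], intro vec_eqI8) (simp_all add: br_N1 axis_def)
lemma R_x2_N1: "Rk N1 (axis X2 1)"
  by (rule Rk_line[where c="\<lambda>v. - v$X1" and w="axis Y1 1"], intro vec_eqI8) (simp_all add: br_N1 axis_def)
lemma R_x3_N1: "Rk N1 (axis X3 1)"
  by (rule Rk_line[where c="\<lambda>v. v$X4" and w="axis Y2 1"], intro vec_eqI8) (simp_all add: br_N1 axis_def)
lemma R_x5_N1: "Rk N1 (axis X5 1)"
  by (rule Rk_line[where c="\<lambda>v. v$X6" and w="axis Y1 1 + axis Y2 1"], intro vec_eqI8) (simp_all add: br_N1 axis_def)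
lemma R_x1_N3: "Rk N3 (axis X1 1)"
  by (rule Rk_line[where c="\<lambda>v. v$X2" and w="axis Y1 1"], intro vec_eqI8) (simp_all add: br_N3 axis_def)
lemma R_x2_N3: "Rk N3 (axis X2 1)"
  by (rule Rk_line[where c="\<lambda>v. - v$X1" and w="axis Y1 1"], intro vec_eqI8) (simp_all add: br_N3 axis_def)
lemma R_x3_N3: "Rk N3 (axis X3 1)"
  by (rule Rk_line[where c="\<lambda>v. v$X6" and w="axis Y2 1"], intro vec_eqI8) (simp_all add: br_N3 axis_def)
lemma R_x1_N4: "Rk N4 (axis X1 1)"
  by (rule Rk_line[where c="\<lambda>v. v$X2" and w="axis Y1 1"], intro vec_eqI8) (simp_all add: br_N4 axis_def)
lemma R_x2_N4: "Rk N4 (axis X2 1)"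
  by (rule Rk_line[where c="\<lambda>v. - v$X1" and w="axis Y1 1"], intro vec_eqI8) (simp_all add: br_N4 axis_def)
lemma R_x1_N2: "Rk N2 (axis X1 1)"
  by (rule Rk_line[where c="\<lambda>v. - v$X6" and w="axis Y1 1"], intro vec_eqI8) (simp_all add: br_N2 axis_def)
lemma R_x3_N2: "Rk N2 (axis X3 1)"
  by (rule Rk_line[where c="\<lambda>v. - v$X5" and w="axis Y2 1"], intro vec_eqI8) (simp_all add: br_N2 axis_def)

lemma PA_N1: "PA N1"
  unfolding PA_def using R_x1_N1 R_x2_N1
  by (intro exI[of _ "axis X1 1"] exI[of _ "axis X2 1"]) (simp add: vec_eq_iff br_N1 axis_def exI[of _ Y1])


lemma PA_N3: "PA N3"
  unfolding PA_def using R_x1_N3 R_x2_N3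
  by (intro exI[of _ "axis X1 1"] exI[of _ "axis X2 1"]) (simp add: vec_eq_iff br_N3 axis_def exI[of _ Y1])

lemma PA_N4: "PA N4"
  unfolding PA_def using R_x1_N4 R_x2_N4
  by (intro exI[of _ "axis X1 1"] exI[of _ "axis X2 1"]) (simp add: vec_eq_iff br_N4 axis_def exI[of _ Y1])

lemma PD_N1: "PD N1"
proof -
  have "indep (bracket N1 (axis X1 1) (axis X2 1)) (bracket N1 (axis X3 1) (axis X4 1))"
    by (rule indep_det) (simp add: br_N1 axis_def)
  then show ?thesis unfolding PD_def using R_x1_N1 R_x3_N1 by blast
qed

lemma PD_N2: "PD N2"
proof -
  have "indep (bracket N2 (axis X1 1) (axis X6 1)) (bracket N2 (axis X3 1) (axis X5 1))"
    by (rule indep_det) (simp add: br_N2 axis_def)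
  then show ?thesis unfolding PD_def using R_x1_N2 R_x3_N2 by blast
qed

lemma PD_N3: "PD N3"
proof -
  have "indep (bracket N3 (axis X1 1) (axis X2 1)) (bracket N3 (axis X3 1) (axis X6 1))"
    by (rule indep_det) (simp add: br_N3 axis_def)
  then show ?thesis unfolding PD_def using R_x1_N3 R_x3_N3 by blast
qed

lemma PE_N1: "PE N1"
proof -
  have "indep (bracket N1 (axis X1 1) (axis X2 1)) (bracket N1 (axis X3 1) (axis X4 1))"
    by (rule indep_det) (simp add: br_N1 axis_def)
  moreover have "indep (bracket N1 (axis X1 1) (axis X2 1)) (bracket N1 (axis X5 1) (axis X6 1))"
    by (rule indep_det) (simp add: br_N1 axis_def)
  moreover have "indep (bracket N1 (axis X3 1) (axis X4 1)) (bracket N1 (axis X5 1) (axis X6 1))"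
    by (rule indep_det) (simp add: br_N1 axis_def)
  ultimately show ?thesis unfolding PE_def using R_x1_N1 R_x3_N1 R_x5_N1 by blast
qed

lemma noniso_by_PA: "PA L1 \<Longrightarrow> \<not> PA L2 \<Longrightarrow> \<not> lie_iso L1 L2 \<and> \<not> lie_iso L2 L1"
  using iso_props by blast
lemma noniso_by_PD: "PD L1 \<Longrightarrow> \<not> PD L2 \<Longrightarrow> \<not> lie_iso L1 L2 \<and> \<not> lie_iso L2 L1"
  using iso_props by blast
lemma noniso_by_PE: "PE L1 \<Longrightarrow> \<not> PE L2 \<Longrightarrow> \<not> lie_iso L1 L2 \<and> \<not> lie_iso L2 L1"
  using iso_props by blast

theorem theorem2:
  shows "\<forall>i\<in>{1..5::nat}. \<forall>j\<in>{1..5::nat}. i \<noteq> j \<longrightarrow> \<not> lie_iso (N i) (N j)"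
proof -
  have 12: "\<not> lie_iso N1 N2 \<and> \<not> lie_iso N2 N1" by (rule noniso_by_PA[OF PA_N1 not_PA_N2])
  have 13: "\<not> lie_iso N1 N3 \<and> \<not> lie_iso N3 N1" by (rule noniso_by_PE[OF PE_N1 not_PE_N3])
  have 14: "\<not> lie_iso N1 N4 \<and> \<not> lie_iso N4 N1" by (rule noniso_by_PD[OF PD_N1 not_PD_N4])
  have 15: "\<not> lie_iso N1 N5 \<and> \<not> lie_iso N5 N1" by (rule noniso_by_PA[OF PA_N1 not_PA_N5])
  have 23: "\<not> lie_iso N3 N2 \<and> \<not> lie_iso N2 N3" by (rule noniso_by_PA[OF PA_N3 not_PA_N2])
  have 24: "\<not> lie_iso N4 N2 \<and> \<not> lie_iso N2 N4" by (rule noniso_by_PA[OF PA_N4 not_PA_N2])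
  have 25: "\<not> lie_iso N2 N5 \<and> \<not> lie_iso N5 N2" by (rule noniso_by_PD[OF PD_N2 not_PD_N5])
  have 34: "\<not> lie_iso N3 N4 \<and> \<not> lie_iso N4 N3" by (rule noniso_by_PD[OF PD_N3 not_PD_N4])
  have 35: "\<not> lie_iso N3 N5 \<and> \<not> lie_iso N5 N3" by (rule noniso_by_PA[OF PA_N3 not_PA_N5])
  have 45: "\<not> lie_iso N4 N5 \<and> \<not> lie_iso N5 N4" by (rule noniso_by_PA[OF PA_N4 not_PA_N5])
  have r: "i \<in> {1..5::nat} \<Longrightarrow> i = 1 \<or> i = 2 \<or> i = 3 \<or> i = 4 \<or> i = 5" for i by auto
  show ?thesis
  proof (intro ballI impI)
    fix i j :: nat assume "i \<in> {1..5}" "j \<in> {1..5}" "i \<noteq> j"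
    then have ri: "i = 1 \<or> i = 2 \<or> i = 3 \<or> i = 4 \<or> i = 5" and rj: "j = 1 \<or> j = 2 \<or> j = 3 \<or> j = 4 \<or> j = 5"
      using r by blast+
    from ri rj \<open>i \<noteq> j\<close> show "\<not> lie_iso (N i) (N j)"
      using 12 13 14 15 23 24 25 34 35 45 by (elim disjE) (simp_all add: N_def)
  qed
qed

end
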